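(* Let $\{\Theta_n\}_{n\ge0}$ be a translational family of lattice congruences, $\Theta_n$ a congruence on the weak order on $S_n$. Then the map $c:\mathbb{K}[Z^\Theta_\infty]\to\mathbb{K}[S_\infty]$ is an injective algebra homomorphism, i.e. $c(u\bullet_Z v)=c(u)\bullet_S c(v)$ for all $u\in Z_p$, $v\in Z_q$, so $c$ embeds $(\mathbb{K}[Z^\Theta_\infty],\bullet_Z)$ as a subalgebra of $(\mathbb{K}[S_\infty],\bullet_S)$.
   Context: $S_n$ is the set of permutations of $[n]=\{1,\dots,n\}$ in one-line notation $x=x_1\cdots x_n$, with the (right) weak order: $x\le y$ iff $\{(x_i,x_j):x_i<x_j,\ i>j\}\subseteq\{(y_i,y_j):y_i<y_j,\ i>j\}$; this is a lattice. For $u\in S_p$, $v\in S_q$, $u\times v\in S_{p+q}$ is $u_1\cdots u_p(p+v_1)\cdots(p+v_q)$. The standardization $\mathrm{st}(a_1,\dots,a_k)$ of a sequence of distinct integers is the $u\in S_k$ with $u_i<u_j\iff a_i<a_j$. For $x\in S_{p+q}$ let $x_{\bar p}:=u\times v$, where $u$ is the standardization of the subsequence of $x$ consisting of entries in $[1,p]$ and $v$ the standardization of the subsequence of entries in $[p+1,p+q]$. For a congruence $\Theta_n$ on $S_n$, $\pi_\downarrow x$ denotes the minimum of the class of $x$. Translational: for all $p,q\ge0$, $u,u'\in S_p$, $v,v'\in S_q$: $u\times v\equiv u'\times v'\pmod{\Theta_{p+q}}$ iff $u\equiv u'\pmod{\Theta_p}$ and $v\equiv v'\pmod{\Theta_q}$.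 $\mathbb{K}$ is a field; $\mathbb{K}[S_\infty]=\bigoplus_{n\ge0}\mathbb{K}[S_n]$ with the Malvenuto–Reutenauer product $u\bullet_S v=\sum_{x\in S_{p+q},\,x_{\bar p}=u\times v}x$ (the sum of all shuffles of $u$ and $v$). Let $Z_n=\{x\in S_n:\pi_\downarrow x=x\}$ (identified with $S_n/\Theta_n$), $\mathbb{K}[Z^\Theta_\infty]=\bigoplus_{n\ge0}\mathbb{K}[Z_n]$, with product $u\bullet_Z v=\sum_{x\in Z_{p+q},\,x_{\bar p}=u\times v}x$ for $u\in Z_p$, $v\in Z_q$. The linear map $c$ sends $x\in Z_n$ to the sum of all elements of the $\Theta_n$-class of $x$. *)

theory Defs
  imports Main
begin

definition perms :: "nat \<Rightarrow> nat list set" where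
  "perms n = {xs. distinct xs \<and> set xs = {1..n}}"

definition inv_set :: "nat list \<Rightarrow> (nat \<times> nat) set" where
  "inv_set x = {(x ! i, x ! j) | i j. j < i \<and> i < length x \<and> x ! i < x ! j}"

definition weak_le :: "nat list \<Rightarrow> nat list \<Rightarrow> bool" where
  "weak_le x y \<longleftrightarrow> inv_set x \<subseteq> inv_set y"

definition is_join :: "nat \<Rightarrow> nat list \<Rightarrow> nat list \<Rightarrow> nat list \<Rightarrow> bool" where
  "is_join n x y z \<longleftrightarrow> z \<in> perms n \<and> weak_le x z \<and> weak_le y z \<and>
     (\<forall>w\<in>perms n. weak_le x w \<and> weak_le y w \<longrightarrow> weak_le z w)"

definition is_meet :: "nat \<Rightarrow> nat list \<Rightarrow> nat list \<Rightarrow> nat list \<Rightarrow> bool" where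
  "is_meet n x y z \<longleftrightarrow> z \<in> perms n \<and> weak_le z x \<and> weak_le z y \<and>
     (\<forall>w\<in>perms n. weak_le w x \<and> weak_le w y \<longrightarrow> weak_le w z)"

definition lattice_congruence :: "nat \<Rightarrow> (nat list \<Rightarrow> nat list \<Rightarrow> bool) \<Rightarrow> bool" where
  "lattice_congruence n R \<longleftrightarrow>
     (\<forall>x y. R x y \<longrightarrow> x \<in> perms n \<and> y \<in> perms n) \<and>
     (\<forall>x\<in>perms n. R x x) \<and>
     (\<forall>x y. R x y \<longrightarrow> R y x) \<and>
     (\<forall>x y z. R x y \<longrightarrow> R y z \<longrightarrow> R x z) \<and>
     (\<forall>x x' y y' z z'. R x x' \<longrightarrow> R y y' \<longrightarrow> is_join n x y z \<longrightarrow> is_join n x' y' z' \<longrightarrow> R z z') \<and>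
     (\<forall>x x' y y' z z'. R x x' \<longrightarrow> R y y' \<longrightarrow> is_meet n x y z \<longrightarrow> is_meet n x' y' z' \<longrightarrow> R z z')"

definition ptimes :: "nat list \<Rightarrow> nat list \<Rightarrow> nat list" where
  "ptimes u v = u @ map (\<lambda>i. length u + i) v"

definition st :: "nat list \<Rightarrow> nat list" where
  "st xs = map (\<lambda>a. card {b \<in> set xs. b \<le> a}) xs"

definition xbar :: "nat \<Rightarrow> nat list \<Rightarrow> nat list" where
  "xbar p x = ptimes (st (filter (\<lambda>a. a \<le> p) x)) (st (filter (\<lambda>a. p < a) x))"

definition translational :: "(nat \<Rightarrow> nat list \<Rightarrow> nat list \<Rightarrow> bool) \<Rightarrow> bool" where
  "translational \<Theta> \<longleftrightarrow>
     (\<forall>p q u u' v v'. u \<in> perms p \<longrightarrow> u' \<in> perms p \<longrightarrow> v \<in> perms q \<longrightarrow> v' \<in> perms q \<longrightarrow>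
        (\<Theta> (p + q) (ptimes u v) (ptimes u' v') \<longleftrightarrow> \<Theta> p u u' \<and> \<Theta> q v v'))"

text \<open>Z_n: the elements equal to the minimum of their class (pi_down x = x).\<close>
definition Zset :: "(nat \<Rightarrow> nat list \<Rightarrow> nat list \<Rightarrow> bool) \<Rightarrow> nat \<Rightarrow> nat list set" where
  "Zset \<Theta> n = {x \<in> perms n. \<forall>y. \<Theta> n x y \<longrightarrow> weak_le x y}"

text \<open>Elements of K[S_infty] (and K[Z_infty]) are K-valued functions on nat lists
  (coefficients); a basis element is an indicator.\<close>
definition basis :: "nat list \<Rightarrow> nat list \<Rightarrow> 'k::field" where
  "basis x = (\<lambda>y. if y = x then 1 else 0)"

text \<open>Bilinear extension of the Malvenuto-Reutenauer product (for arguments supported on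
  permutations): coefficient of x in f \<bullet>_S g.\<close>
definition mulS :: "(nat list \<Rightarrow> 'k::field) \<Rightarrow> (nat list \<Rightarrow> 'k) \<Rightarrow> nat list \<Rightarrow> 'k" where
  "mulS f g x = (if x \<in> perms (length x) then
      (\<Sum>p\<in>{0..length x}. \<Sum>u\<in>perms p. \<Sum>v\<in>perms (length x - p).
          (if xbar p x = ptimes u v then f u * g v else 0))
    else 0)"

text \<open>Bilinear extension of the product \<bullet>_Z on K[Z_infty].\<close>
definition mulZ :: "(nat \<Rightarrow> nat list \<Rightarrow> nat list \<Rightarrow> bool) \<Rightarrow>
    (nat list \<Rightarrow> 'k::field) \<Rightarrow> (nat list \<Rightarrow> 'k) \<Rightarrow> nat list \<Rightarrow> 'k" where
  "mulZ \<Theta> f g x = (if x \<in> Zset \<Theta> (length x) then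
      (\<Sum>p\<in>{0..length x}. \<Sum>u\<in>Zset \<Theta> p. \<Sum>v\<in>Zset \<Theta> (length x - p).
          (if xbar p x = ptimes u v then f u * g v else 0))
    else 0)"

text \<open>The linear map c: z \<in> Z_n goes to the sum of its Theta_n-class.\<close>
definition cmap :: "(nat \<Rightarrow> nat list \<Rightarrow> nat list \<Rightarrow> bool) \<Rightarrow>
    (nat list \<Rightarrow> 'k::field) \<Rightarrow> nat list \<Rightarrow> 'k" where
  "cmap \<Theta> f x = (\<Sum>z\<in>{z \<in> Zset \<Theta> (length x). \<Theta> (length x) z x}. f z)"

definition KZ :: "(nat \<Rightarrow> nat list \<Rightarrow> nat list \<Rightarrow> bool) \<Rightarrow> (nat list \<Rightarrow> 'k::field) set" where
  "KZ \<Theta> = {f. \<forall>x. f x \<noteq> 0 \<longrightarrow> (\<exists>n. x \<in> Zset \<Theta> n)}"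

end

theory Submission
  imports Defs
begin


fun bef :: "nat list \<Rightarrow> nat \<Rightarrow> nat \<Rightarrow> bool" where
  "bef [] a b = False"
| "bef (x#xs) a b = ((x = a \<and> b \<in> set xs) \<or> bef xs a b)"

lemma bef_append: "bef (xs @ ys) a b \<longleftrightarrow> bef xs a b \<or> bef ys a b \<or> (a \<in> set xs \<and> b \<in> set ys)"
  by (induction xs) auto

lemma bef_set: "bef xs a b \<Longrightarrow> a \<in> set xs \<and> b \<in> set xs"
  by (induction xs) auto

lemma bef_nth: "bef xs a b \<longleftrightarrow> (\<exists>i j. i < j \<and> j < length xs \<and> xs!i = a \<and> xs!j = b)"
proof (induction xs)
  case Nil then show ?case by simp
next
  case (Cons x xs)
  show ?case
  proof
    assume "bef (x#xs) a b"
    then consider "x = a" "b \<in> set xs" | "bef xs a b" by auto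
    then show "\<exists>i j. i < j \<and> j < length (x#xs) \<and> (x#xs)!i = a \<and> (x#xs)!j = b"
    proof cases
      case 1
      then obtain j where "j < length xs" "xs!j = b" by (auto simp: in_set_conv_nth)
      with 1 show ?thesis by (intro exI[of _ 0] exI[of _ "Suc j"]) auto
    next
      case 2
      then obtain i j where "i < j" "j < length xs" "xs!i = a" "xs!j = b" using Cons by auto
      then show ?thesis by (intro exI[of _ "Suc i"] exI[of _ "Suc j"]) auto
    qed
  next
    assume "\<exists>i j. i < j \<and> j < length (x#xs) \<and> (x#xs)!i = a \<and> (x#xs)!j = b"
    then obtain i j where ij: "i < j" "j < length (x#xs)" "(x#xs)!i = a" "(x#xs)!j = b" by blast
    then obtain j' where j': "j = Suc j'" by (cases j) auto
    show "bef (x#xs) a b"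
    proof (cases i)
      case 0
      then show ?thesis using ij j' by auto
    next
      case (Suc i')
      then have "bef xs a b" using Cons ij j' by auto
      then show ?thesis by simp
    qed
  qed
qed

lemma bef_distinct_asym: "distinct xs \<Longrightarrow> bef xs a b \<Longrightarrow> \<not> bef xs b a"
  by (induction xs) (auto dest: bef_set)

lemma bef_irrefl: "distinct xs \<Longrightarrow> \<not> bef xs a a"
  using bef_distinct_asym by blast

lemma bef_total: "a \<in> set xs \<Longrightarrow> b \<in> set xs \<Longrightarrow> a \<noteq> b \<Longrightarrow> bef xs a b \<or> bef xs b a"
  by (induction xs) auto

lemma bef_trans: "distinct xs \<Longrightarrow> bef xs a b \<Longrightarrow> bef xs b c \<Longrightarrow> bef xs a c"
  by (induction xs) (auto dest: bef_set)

lemma bef_filter: "bef (filter P xs) a b \<longleftrightarrow> P a \<and> P b \<and> bef xs a b"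
  by (induction xs) auto

lemma bef_map: "bef (map f xs) c d \<longleftrightarrow> (\<exists>a b. bef xs a b \<and> c = f a \<and> d = f b)"
  by (induction xs) auto

lemma inv_set_bef: "inv_set x = {(s,l). s < l \<and> bef x l s}"
  unfolding inv_set_def bef_nth by auto



definition Pn :: "nat \<Rightarrow> (nat \<times> nat) set" where
  "Pn n = {(a,b). 1 \<le> a \<and> a < b \<and> b \<le> n}"

definition cotrans :: "(nat \<times> nat) set \<Rightarrow> bool" where
  "cotrans I \<longleftrightarrow> (\<forall>a b c. (a,c) \<in> I \<longrightarrow> a < b \<longrightarrow> b < c \<longrightarrow> (a,b) \<in> I \<or> (b,c) \<in> I)"

lemma perms_D: "x \<in> perms n \<Longrightarrow> distinct x \<and> set x = {1..n} \<and> length x = n"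
  unfolding perms_def using distinct_card by fastforce

lemma finite_perms: "finite (perms n)"
proof -
  have "perms n \<subseteq> {xs. set xs \<subseteq> {1..n} \<and> length xs = n}" using perms_D by blast
  then show ?thesis using finite_lists_length_eq[of "{1..n}" n] finite_subset by blast
qed

lemma inv_Pn: "x \<in> perms n \<Longrightarrow> inv_set x \<subseteq> Pn n"
  unfolding inv_set_bef Pn_def using perms_D bef_set by fastforce

lemma inv_trans: "x \<in> perms n \<Longrightarrow> trans (inv_set x)"
  unfolding inv_set_bef trans_def using perms_D bef_trans by fastforce

lemma inv_cotrans: "x \<in> perms n \<Longrightarrow> cotrans (inv_set x)"
proof -
  assume x: "x \<in> perms n"
  have "bef x b a \<or> bef x c b" if h: "a < c" "bef x c a" "a < b" "b < c" for a b c
  proof -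
    have "a \<in> set x" "c \<in> set x" using h bef_set by auto
    then have "b \<in> set x" using x h perms_D by auto
    then show ?thesis
      using bef_total[of b x a] bef_trans[of x] x perms_D h \<open>a \<in> set x\<close> by (metis nat_neq_iff)
  qed
  then show ?thesis unfolding cotrans_def inv_set_bef by auto
qed

lemma list_eq_bef: "distinct x \<Longrightarrow> distinct y \<Longrightarrow> set x = set y \<Longrightarrow> (\<forall>a b. bef x a b = bef y a b) \<Longrightarrow> x = y"
proof (induction x arbitrary: y)
  case Nil then show ?case by simp
next
  case (Cons h xs)
  then obtain h' ys where y: "y = h' # ys" by (cases y) auto
  have "h = h'"
  proof (rule ccontr)
    assume "h \<noteq> h'"
    then have "h' \<in> set xs" "h \<in> set ys" using Cons.prems y by auto
    then have "bef (h#xs) h h'" "bef y h' h" using y by auto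
    then show False using Cons.prems bef_distinct_asym by metis
  qed
  moreover have "xs = ys"
  proof (rule Cons.IH)
    show "distinct xs" "distinct ys" using Cons.prems y by auto
    show "set xs = set ys" using Cons.prems y \<open>h = h'\<close> by auto
    show "\<forall>a b. bef xs a b = bef ys a b"
    proof (intro allI)
      fix a b
      have "bef (h#xs) a b = bef y a b" using Cons.prems by blast
      then have "(h' = a \<and> b \<in> set xs \<or> bef xs a b) = (h' = a \<and> b \<in> set ys \<or> bef ys a b)"
        using y \<open>h = h'\<close> by simp
      moreover have "h' \<notin> set xs" "h' \<notin> set ys" using Cons.prems y \<open>h = h'\<close> by auto
      ultimately show "bef xs a b = bef ys a b" using bef_set[of xs a b] bef_set[of ys a b] by blast
    qed
  qed
  ultimately show ?case using y by simp
qed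

lemma inv_inj: "x \<in> perms n \<Longrightarrow> y \<in> perms n \<Longrightarrow> inv_set x = inv_set y \<Longrightarrow> x = y"
proof -
  assume x: "x \<in> perms n" and y: "y \<in> perms n" and e: "inv_set x = inv_set y"
  have "bef x a b = bef y a b" for a b
  proof (cases "a \<in> set x \<and> b \<in> set x \<and> a \<noteq> b")
    case True
    then have T: "a \<in> set y" "b \<in> set y" using x y perms_D by auto
    show ?thesis
    proof (cases "a < b")
      case True
      then have "bef x b a = bef y b a" using e unfolding inv_set_bef by (auto simp: set_eq_iff)
      then show ?thesis using \<open>a \<in> set x \<and> b \<in> set x \<and> a \<noteq> b\<close> T bef_total bef_distinct_asym x y perms_D by metis
    next
      case False
      then have "b < a" using True by auto
      then have "bef x a b = bef y a b" using e unfolding inv_set_bef by (auto simp: set_eq_iff)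
      then show ?thesis .
    qed
  next
    case False
    then show ?thesis using bef_set bef_irrefl x y perms_D by metis
  qed
  then show ?thesis using list_eq_bef x y perms_D by metis
qed


lemma exists_min:
  assumes "finite S" "S \<noteq> {}" "\<forall>a\<in>S. \<not> R a a" "\<forall>a\<in>S. \<forall>b\<in>S. \<forall>c\<in>S. R a b \<longrightarrow> R b c \<longrightarrow> R a c"
  shows "\<exists>m\<in>S. \<forall>b\<in>S. \<not> R b m"
  using assms
proof (induction S rule: finite_induct)
  case empty from empty.prems(1) show ?case by blast
next
  case (insert x A)
  show ?case
  proof (cases "A = {}")
    case True then show ?thesis using insert.prems(2) by simp
  next
    case False
    have "\<exists>m\<in>A. \<forall>b\<in>A. \<not> R b m"
      apply (rule insert.IH[OF False])
      using insert.prems by blast+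
    then obtain m where m: "m \<in> A" "\<forall>b\<in>A. \<not> R b m" by blast
    show ?thesis
    proof (cases "R x m")
      case True
      have "\<not> R b x" if "b \<in> insert x A" for b
      proof
        assume "R b x"
        show False
        proof (cases "b = x")
          case True then show False using \<open>R b x\<close> insert.prems(2) by simp
        next
          case False
          then have "b \<in> A" using that by simp
          have "x \<in> insert x A" "m \<in> insert x A" "b \<in> insert x A" using m(1) \<open>b \<in> A\<close> by simp_all
          then have "R b m" using \<open>R b x\<close> \<open>R x m\<close> insert.prems(3) by metis
          then show False using m \<open>b \<in> A\<close> by blast
        qed
      qed
      then show ?thesis by blast
    next
      case False
      have "\<forall>b\<in>insert x A. \<not> R b m" using False m by simp
      then show ?thesis using m(1) by blast
    qed
  qed
qed
lemma exists_sorted: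
  assumes "finite S" "\<forall>a\<in>S. \<not> R a a" "\<forall>a\<in>S. \<forall>b\<in>S. \<forall>c\<in>S. R a b \<longrightarrow> R b c \<longrightarrow> R a c"
    "\<forall>a\<in>S. \<forall>b\<in>S. a \<noteq> b \<longrightarrow> R a b \<or> R b a"
  shows "\<exists>xs. distinct xs \<and> set xs = S \<and> (\<forall>a b. bef xs a b \<longleftrightarrow> a \<in> S \<and> b \<in> S \<and> R a b)"
  using assms
proof (induction S rule: finite_remove_induct)
  case empty show ?case by (intro exI[of _ "[]"]) simp
next
  case (remove A)
  have "\<exists>m\<in>A. \<forall>b\<in>A. \<not> R b m"
    by (rule exists_min[OF remove(1) remove(2) remove.prems(1) remove.prems(2)])
  then obtain m where m: "m \<in> A" "\<forall>b\<in>A. \<not> R b m" by blast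
  have "\<exists>xs. distinct xs \<and> set xs = A - {m} \<and> (\<forall>a b. bef xs a b \<longleftrightarrow> a \<in> A - {m} \<and> b \<in> A - {m} \<and> R a b)"
    apply (rule remove.IH[OF m(1)])
    using remove.prems by blast+
  then obtain xs where xs: "distinct xs" "set xs = A - {m}" "\<forall>a b. bef xs a b \<longleftrightarrow> a \<in> A - {m} \<and> b \<in> A - {m} \<and> R a b"
    by blast
  show ?case
  proof (intro exI[of _ "m # xs"] conjI allI)
    show "distinct (m # xs)" using xs by auto
    show "set (m # xs) = A" using xs m by auto
    fix a b
    have irr: "\<not> R a a" if "a \<in> A" for a using remove.prems(1) that by blast
    have tot: "R a b \<or> R b a" if "a \<in> A" "b \<in> A" "a \<noteq> b" for a b using remove.prems(3) that by blast
    have "bef (m # xs) a b \<longleftrightarrow> (m = a \<and> b \<in> A - {m}) \<or> (a \<in> A - {m} \<and> b \<in> A - {m} \<and> R a b)"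
      using xs by simp
    also have "\<dots> \<longleftrightarrow> a \<in> A \<and> b \<in> A \<and> R a b"
    proof
      assume "(m = a \<and> b \<in> A - {m}) \<or> (a \<in> A - {m} \<and> b \<in> A - {m} \<and> R a b)"
      then show "a \<in> A \<and> b \<in> A \<and> R a b"
      proof
        assume h: "m = a \<and> b \<in> A - {m}"
        then have "R m b \<or> R b m" using tot[of m b] m by auto
        then show ?thesis using h m by auto
      qed auto
    next
      assume h: "a \<in> A \<and> b \<in> A \<and> R a b"
      then have "b \<noteq> m" using m by auto
      moreover have "a \<noteq> b" using h irr by auto
      ultimately show "(m = a \<and> b \<in> A - {m}) \<or> (a \<in> A - {m} \<and> b \<in> A - {m} \<and> R a b)"
        using h by auto
    qed
    finally show "bef (m # xs) a b \<longleftrightarrow> a \<in> A \<and> b \<in> A \<and> R a b" .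
  qed
qed

lemma realize:
  assumes "I \<subseteq> Pn n" "trans I" "cotrans I"
  shows "\<exists>x\<in>perms n. inv_set x = I"
proof -
  define R where "R a b \<longleftrightarrow> a \<noteq> b \<and> (if b < a then (b,a) \<in> I else (a,b) \<notin> I)" for a b
  have tr: "(a,b) \<in> I \<Longrightarrow> (b,c) \<in> I \<Longrightarrow> (a,c) \<in> I" for a b c using assms(2) unfolding trans_def by blast
  have co: "(a,c) \<in> I \<Longrightarrow> a < b \<Longrightarrow> b < c \<Longrightarrow> (a,b) \<in> I \<or> (b,c) \<in> I" for a b c using assms(3) unfolding cotrans_def by blast
  have lt: "(a,b) \<in> I \<Longrightarrow> a < b" for a b using assms(1) unfolding Pn_def by auto
  have Rt: "R a c" if "R a b" "R b c" for a b c
  proof -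
    have "a \<noteq> c"
    proof
      assume "a = c"
      then show False using that unfolding R_def by (cases "b < a") auto
    qed
    have "a \<noteq> b" "b \<noteq> c" using that R_def by auto
    consider "a > b" "b > c" | "a < b" "b < c" | "a > b" "b < c" "a > c" | "a > b" "b < c" "a < c"
      | "a < b" "b > c" "a > c" | "a < b" "b > c" "a < c"
      using \<open>a \<noteq> b\<close> \<open>b \<noteq> c\<close> \<open>a \<noteq> c\<close> by (meson linorder_neqE_nat)
    then show ?thesis
    proof cases
      case 1 then show ?thesis using that tr \<open>a \<noteq> c\<close> unfolding R_def by auto
    next
      case 2 then show ?thesis using that co \<open>a \<noteq> c\<close> unfolding R_def by auto
    next
      case 3 then show ?thesis using that co[of b a c] \<open>a \<noteq> c\<close> unfolding R_def by auto
    next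
      case 4 then show ?thesis using that tr[of b a c] \<open>a \<noteq> c\<close> unfolding R_def by auto
    next
      case 5
      then have "(c,b) \<in> I" "(a,b) \<notin> I" using that unfolding R_def by auto
      then have "(c,a) \<in> I" using co[of c b a] 5 by auto
      then show ?thesis using 5 unfolding R_def by auto
    next
      case 6 then show ?thesis using that tr[of a c b] \<open>a \<noteq> c\<close> unfolding R_def by auto
    qed
  qed
  have "\<forall>a\<in>{1..n}. \<forall>b\<in>{1..n}. a \<noteq> b \<longrightarrow> R a b \<or> R b a" unfolding R_def by auto
  moreover have "\<forall>a\<in>{1..n}. \<not> R a a" unfolding R_def by auto
  ultimately obtain xs where xs: "distinct xs" "set xs = {1..n}" "\<forall>a b. bef xs a b \<longleftrightarrow> a \<in> {1..n} \<and> b \<in> {1..n} \<and> R a b"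
    using exists_sorted[of "{1..n}" R] Rt by blast
  have "xs \<in> perms n" using xs unfolding perms_def by auto
  moreover have "inv_set xs = I"
    unfolding inv_set_bef using xs(3) assms(1) unfolding R_def Pn_def by auto
  ultimately show ?thesis by blast
qed


lemma weak_le_refl: "weak_le x x" unfolding weak_le_def by simp
lemma weak_le_trans: "weak_le x y \<Longrightarrow> weak_le y z \<Longrightarrow> weak_le x z" unfolding weak_le_def by blast
lemma weak_le_antisym: "x \<in> perms n \<Longrightarrow> y \<in> perms n \<Longrightarrow> weak_le x y \<Longrightarrow> weak_le y x \<Longrightarrow> x = y"
  unfolding weak_le_def using inv_inj by blast

lemma Pn_trans: "trans (Pn n)" unfolding trans_def Pn_def by auto

lemma trancl_cotrans:
  assumes "A \<subseteq> {(a,b). a < b}" "cotrans A"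
  shows "cotrans (A\<^sup>+)"
proof -
  have co: "(a,c) \<in> A \<Longrightarrow> a < b \<Longrightarrow> b < c \<Longrightarrow> (a,b) \<in> A \<or> (b,c) \<in> A" for a b c
    using assms(2) unfolding cotrans_def by blast
  have "\<forall>b. a < b \<longrightarrow> b < c \<longrightarrow> (a,b) \<in> A\<^sup>+ \<or> (b,c) \<in> A\<^sup>+" if "(a,c) \<in> A\<^sup>+" for a c
    using that
  proof (induction rule: trancl_induct)
    case (base y)
    then show ?case using co by blast
  next
    case (step y z)
    show ?case
    proof (intro allI impI)
      fix b assume b: "a < b" "b < z"
      consider "b < y" | "b = y" | "y < b" by linarith
      then show "(a,b) \<in> A\<^sup>+ \<or> (b,z) \<in> A\<^sup>+"
      proof cases
        case 1
        then have "(a,b) \<in> A\<^sup>+ \<or> (b,y) \<in> A\<^sup>+" using step.IH b by blast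
        then show ?thesis using step.hyps(2) by (meson trancl.trancl_into_trancl)
      next
        case 2 then show ?thesis using step.hyps(1) by blast
      next
        case 3
        have "(y,b) \<in> A \<or> (b,z) \<in> A" by (rule co[OF step.hyps(2) 3 b(2)])
        then show ?thesis using step.hyps(1) by (meson r_into_trancl' trancl.trancl_into_trancl)
      qed
    qed
  qed
  then show ?thesis unfolding cotrans_def by blast
qed

lemma cotrans_Un: "cotrans A \<Longrightarrow> cotrans B \<Longrightarrow> cotrans (A \<union> B)"
  unfolding cotrans_def by blast

lemma comp_trans_cotrans:
  assumes "I \<subseteq> Pn n" "trans I" "cotrans I"
  shows "trans (Pn n - I)" "cotrans (Pn n - I)"
proof -
  show "trans (Pn n - I)"
    using assms(3) unfolding trans_def cotrans_def Pn_def by auto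
  show "cotrans (Pn n - I)"
    unfolding cotrans_def
  proof (intro allI impI)
    fix a b c assume h: "(a,c) \<in> Pn n - I" "a < b" "b < c"
    then have "(a,b) \<in> Pn n" "(b,c) \<in> Pn n" unfolding Pn_def by auto
    moreover have "\<not> ((a,b) \<in> I \<and> (b,c) \<in> I)" using h assms(2) unfolding trans_def by blast
    ultimately show "(a,b) \<in> Pn n - I \<or> (b,c) \<in> Pn n - I" by blast
  qed
qed

lemma join_exists:
  assumes "x \<in> perms n" "y \<in> perms n"
  shows "\<exists>z. is_join n x y z"
proof -
  define I where "I = (inv_set x \<union> inv_set y)\<^sup>+"
  have sub: "inv_set x \<union> inv_set y \<subseteq> Pn n" using inv_Pn assms by blast
  have "I \<subseteq> Pn n" unfolding I_def using trancl_mono_subset[OF sub] trancl_id[OF Pn_trans] by blast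
  moreover have "trans I" unfolding I_def by simp
  moreover have "cotrans I" unfolding I_def
    by (rule trancl_cotrans) (use sub in \<open>auto simp: Pn_def intro: cotrans_Un inv_cotrans assms\<close>)
  ultimately obtain z where z: "z \<in> perms n" "inv_set z = I" using realize by blast
  have "is_join n x y z" unfolding is_join_def weak_le_def
  proof (intro conjI ballI impI)
    show "z \<in> perms n" by fact
    show "inv_set x \<subseteq> inv_set z" "inv_set y \<subseteq> inv_set z" using z unfolding I_def by auto
    fix w assume w: "w \<in> perms n" "inv_set x \<subseteq> inv_set w \<and> inv_set y \<subseteq> inv_set w"
    then have "I \<subseteq> (inv_set w)\<^sup>+" unfolding I_def by (intro trancl_mono_subset) auto
    then show "inv_set z \<subseteq> inv_set w" using z trancl_id[OF inv_trans[OF w(1)]] by simp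
  qed
  then show ?thesis by blast
qed

lemma meet_exists:
  assumes "x \<in> perms n" "y \<in> perms n"
  shows "\<exists>z. is_meet n x y z"
proof -
  define J where "J = ((Pn n - inv_set x) \<union> (Pn n - inv_set y))\<^sup>+"
  have cx: "trans (Pn n - inv_set x)" "cotrans (Pn n - inv_set x)"
    using comp_trans_cotrans[OF inv_Pn inv_trans inv_cotrans] assms(1) by blast+
  have cy: "trans (Pn n - inv_set y)" "cotrans (Pn n - inv_set y)"
    using comp_trans_cotrans[OF inv_Pn inv_trans inv_cotrans] assms(2) by blast+
  have sub: "(Pn n - inv_set x) \<union> (Pn n - inv_set y) \<subseteq> Pn n" by blast
  have JP: "J \<subseteq> Pn n" unfolding J_def using trancl_mono_subset[OF sub] trancl_id[OF Pn_trans] by blast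
  have "trans J" unfolding J_def by simp
  moreover have "cotrans J" unfolding J_def
    by (rule trancl_cotrans) (use sub cx cy in \<open>auto simp: Pn_def intro: cotrans_Un\<close>)
  ultimately have "trans (Pn n - J)" "cotrans (Pn n - J)" using comp_trans_cotrans[OF JP] by blast+
  then obtain z where z: "z \<in> perms n" "inv_set z = Pn n - J" using realize[of "Pn n - J" n] by blast
  have "is_meet n x y z" unfolding is_meet_def weak_le_def
  proof (intro conjI ballI impI)
    show "z \<in> perms n" by fact
    show "inv_set z \<subseteq> inv_set x" "inv_set z \<subseteq> inv_set y" using z unfolding J_def by auto
    fix w assume w: "w \<in> perms n" "inv_set w \<subseteq> inv_set x \<and> inv_set w \<subseteq> inv_set y"
    have wt: "trans (Pn n - inv_set w)"
      using comp_trans_cotrans[OF inv_Pn inv_trans inv_cotrans] w(1) by blast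
    have "J \<subseteq> (Pn n - inv_set w)\<^sup>+" unfolding J_def using w(2) by (intro trancl_mono_subset) auto
    then have "J \<subseteq> Pn n - inv_set w" using trancl_id[OF wt] by simp
    then show "inv_set w \<subseteq> inv_set z" using z inv_Pn[OF w(1)] by auto
  qed
  then show ?thesis by blast
qed

lemma join_le: "x \<in> perms n \<Longrightarrow> y \<in> perms n \<Longrightarrow> weak_le x y \<Longrightarrow> is_join n x y y"
  unfolding is_join_def using weak_le_refl by blast
lemma meet_le: "x \<in> perms n \<Longrightarrow> y \<in> perms n \<Longrightarrow> weak_le x y \<Longrightarrow> is_meet n x y x"
  unfolding is_meet_def using weak_le_refl by blast
lemma join_comm: "is_join n x y z \<Longrightarrow> is_join n y x z" unfolding is_join_def by blast
lemma meet_comm: "is_meet n x y z \<Longrightarrow> is_meet n y x z" unfolding is_meet_def by blast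
lemma join_ub: "is_join n x y z \<Longrightarrow> weak_le x z \<and> weak_le y z \<and> z \<in> perms n" unfolding is_join_def by blast
lemma meet_lb: "is_meet n x y z \<Longrightarrow> weak_le z x \<and> weak_le z y \<and> z \<in> perms n" unfolding is_meet_def by blast


context
  fixes n :: nat and R :: "nat list \<Rightarrow> nat list \<Rightarrow> bool"
  assumes lc: "lattice_congruence n R"
begin

lemma lcD: "(\<forall>x y. R x y \<longrightarrow> x \<in> perms n \<and> y \<in> perms n) \<and>
  (\<forall>x\<in>perms n. R x x) \<and> (\<forall>x y. R x y \<longrightarrow> R y x) \<and> (\<forall>x y z. R x y \<longrightarrow> R y z \<longrightarrow> R x z) \<and>
  (\<forall>x x' y y' z z'. R x x' \<longrightarrow> R y y' \<longrightarrow> is_join n x y z \<longrightarrow> is_join n x' y' z' \<longrightarrow> R z z') \<and>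
  (\<forall>x x' y y' z z'. R x x' \<longrightarrow> R y y' \<longrightarrow> is_meet n x y z \<longrightarrow> is_meet n x' y' z' \<longrightarrow> R z z')"
  using lc unfolding lattice_congruence_def .

lemma lc_perm: "R x y \<Longrightarrow> x \<in> perms n \<and> y \<in> perms n"
  using conjunct1[OF lcD] by blast
lemma lc_refl: "x \<in> perms n \<Longrightarrow> R x x"
  using conjunct1[OF conjunct2[OF lcD]] by blast
lemma lc_sym: "R x y \<Longrightarrow> R y x"
  using conjunct1[OF conjunct2[OF conjunct2[OF lcD]]] by blast
lemma lc_trans: "R x y \<Longrightarrow> R y z \<Longrightarrow> R x z"
  using conjunct1[OF conjunct2[OF conjunct2[OF conjunct2[OF lcD]]]] by blast
lemma lc_join: "R x x' \<Longrightarrow> R y y' \<Longrightarrow> is_join n x y z \<Longrightarrow> is_join n x' y' z' \<Longrightarrow> R z z'"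
  using conjunct1[OF conjunct2[OF conjunct2[OF conjunct2[OF conjunct2[OF lcD]]]]] by blast
lemma lc_meet: "R x x' \<Longrightarrow> R y y' \<Longrightarrow> is_meet n x y z \<Longrightarrow> is_meet n x' y' z' \<Longrightarrow> R z z'"
  using conjunct2[OF conjunct2[OF conjunct2[OF conjunct2[OF conjunct2[OF lcD]]]]] by blast

lemma lc_interval: "R a c \<Longrightarrow> b \<in> perms n \<Longrightarrow> weak_le a b \<Longrightarrow> weak_le b c \<Longrightarrow> R b c"
proof -
  assume h: "R a c" "b \<in> perms n" "weak_le a b" "weak_le b c"
  have ac: "a \<in> perms n" "c \<in> perms n" using lc_perm[OF h(1)] by auto
  have "is_join n a b b" by (rule join_le[OF ac(1) h(2) h(3)])
  moreover have "is_join n c b c" by (rule join_comm[OF join_le[OF h(2) ac(2) h(4)]])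
  ultimately show "R b c" by (rule lc_join[OF h(1) lc_refl[OF h(2)]])
qed

lemma class_min: "x \<in> perms n \<Longrightarrow> \<exists>z. R z x \<and> (\<forall>w. R z w \<longrightarrow> weak_le z w)"
proof -
  assume x: "x \<in> perms n"
  have "\<exists>z. R z x \<and> (\<forall>w. R w x \<longrightarrow> card (inv_set z) \<le> card (inv_set w))"
    by (rule ex_has_least_nat[of "\<lambda>w. R w x" x "\<lambda>w. card (inv_set w)"]) (rule lc_refl[OF x])
  then obtain z where z: "R z x" "\<forall>w. R w x \<longrightarrow> card (inv_set z) \<le> card (inv_set w)"
    by blast
  have zp: "z \<in> perms n" using lc_perm[OF z(1)] by simp
  have "weak_le z w" if "R z w" for w
  proof -
    have wp: "w \<in> perms n" using lc_perm[OF that] by simp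
    obtain m where m: "is_meet n z w m" using meet_exists[OF zp wp] by blast
    have "is_meet n z z z" by (rule meet_le[OF zp zp weak_le_refl])
    then have "R z m" using lc_meet[OF lc_refl[OF zp] that _ m] by simp
    then have "R m x" using lc_trans[OF lc_sym z(1)] by simp
    then have "card (inv_set z) \<le> card (inv_set m)" using z(2) by simp
    moreover have "inv_set m \<subseteq> inv_set z" using m unfolding is_meet_def weak_le_def by simp
    moreover have "finite (inv_set z)"
    proof (rule finite_subset)
      show "inv_set z \<subseteq> {1..n} \<times> {1..n}" using inv_Pn[OF zp] unfolding Pn_def by auto
    qed simp
    ultimately have "inv_set m = inv_set z" using card_seteq by blast
    then show ?thesis using m unfolding is_meet_def weak_le_def by simp
  qed
  then show ?thesis using z(1) by blast
qed

lemma min_unique: "R z x \<Longrightarrow> R z' x \<Longrightarrow> (\<forall>w. R z w \<longrightarrow> weak_le z w) \<Longrightarrow> (\<forall>w. R z' w \<longrightarrow> weak_le z' w) \<Longrightarrow> z = z'"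
proof -
  assume h: "R z x" "R z' x" "\<forall>w. R z w \<longrightarrow> weak_le z w" "\<forall>w. R z' w \<longrightarrow> weak_le z' w"
  then have zz: "R z z'" using lc_trans[OF h(1) lc_sym[OF h(2)]] by simp
  have "weak_le z z'" using h(3) zz by simp
  moreover have "weak_le z' z" using h(4) lc_sym[OF zz] by simp
  ultimately show "z = z'" using weak_le_antisym lc_perm[OF zz] by blast
qed

end


lemma st_low: "distinct L \<Longrightarrow> set L = {1..p} \<Longrightarrow> st L = L"
  unfolding st_def
proof (rule map_idI)
  fix a assume "distinct L" "set L = {1..p}" "a \<in> set L"
  then have "{b \<in> set L. b \<le> a} = {1..a}" by auto
  then show "card {b \<in> set L. b \<le> a} = a" by simp
qed

lemma st_high: "distinct H \<Longrightarrow> set H = {p+1..p+q} \<Longrightarrow> st H = map (\<lambda>a. a - p) H"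
  unfolding st_def
proof (rule map_cong[OF refl])
  fix a assume "distinct H" "set H = {p+1..p+q}" "a \<in> set H"
  then have "{b \<in> set H. b \<le> a} = {p+1..a}" by auto
  then show "card {b \<in> set H. b \<le> a} = a - p" by simp
qed

lemma perms_I: "distinct x \<Longrightarrow> set x = {1..n} \<Longrightarrow> x \<in> perms n"
  unfolding perms_def by simp

definition lowp :: "nat \<Rightarrow> nat list \<Rightarrow> nat list" where
  "lowp p x = filter (\<lambda>a. a \<le> p) x"
definition highp :: "nat \<Rightarrow> nat list \<Rightarrow> nat list" where
  "highp p x = map (\<lambda>a. a - p) (filter (\<lambda>a. p < a) x)"

lemma xbar_facts:
  assumes x: "x \<in> perms n" and p: "p \<le> n"
  shows "lowp p x \<in> perms p" "highp p x \<in> perms (n - p)"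
    "xbar p x = ptimes (lowp p x) (highp p x)"
    "xbar p x = filter (\<lambda>a. a \<le> p) x @ filter (\<lambda>a. p < a) x"
proof -
  have d: "distinct x" "set x = {1..n}" using perms_D[OF x] by auto
  have sl: "set (filter (\<lambda>a. a \<le> p) x) = {1..p}" using d p by auto
  have sh: "set (filter (\<lambda>a. p < a) x) = {p+1..p+(n-p)}" using d p by auto
  have dl: "distinct (filter (\<lambda>a. a \<le> p) x)" "distinct (filter (\<lambda>a. p < a) x)" using d by auto
  show lp: "lowp p x \<in> perms p" unfolding lowp_def using sl dl by (intro perms_I) auto
  have inj: "inj_on (\<lambda>a. a - p) {p+1..p+(n-p)}" by (auto simp: inj_on_def)
  have "set (highp p x) = (\<lambda>a. a - p) ` {p+1..p+(n-p)}" unfolding highp_def using sh by simp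
  also have "\<dots> = {1..n-p}"
  proof
    show "(\<lambda>a. a - p) ` {p+1..p+(n-p)} \<subseteq> {1..n-p}" by auto
    show "{1..n-p} \<subseteq> (\<lambda>a. a - p) ` {p+1..p+(n-p)}"
    proof
      fix b assume "b \<in> {1..n-p}"
      then have "p + b \<in> {p+1..p+(n-p)}" "b = (p + b) - p" by auto
      then show "b \<in> (\<lambda>a. a - p) ` {p+1..p+(n-p)}" by blast
    qed
  qed
  finally have "set (highp p x) = {1..n-p}" .
  moreover have "distinct (highp p x)" unfolding highp_def using dl(2) sh inj
    by (simp add: distinct_map)
  ultimately show "highp p x \<in> perms (n - p)" by (intro perms_I)
  have lenl: "length (lowp p x) = p" using perms_D[OF lp] by simp
  have stl: "st (filter (\<lambda>a. a \<le> p) x) = lowp p x" unfolding lowp_def using st_low[OF dl(1) sl] .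
  have sth: "st (filter (\<lambda>a. p < a) x) = highp p x" unfolding highp_def using st_high[OF dl(2) sh] .
  show "xbar p x = ptimes (lowp p x) (highp p x)" unfolding xbar_def stl sth ..
  have "map (\<lambda>i. p + i) (highp p x) = filter (\<lambda>a. p < a) x"
    unfolding highp_def map_map o_def by (rule map_idI) auto
  then show "xbar p x = filter (\<lambda>a. a \<le> p) x @ filter (\<lambda>a. p < a) x"
    using lenl unfolding xbar_def stl sth ptimes_def lowp_def by simp
qed

definition Blocks :: "nat \<Rightarrow> (nat \<times> nat) set" where
  "Blocks p = {(s,l). l \<le> p \<or> p < s}"

lemma inv_xbar:
  assumes x: "x \<in> perms n" and p: "p \<le> n"
  shows "inv_set (xbar p x) = inv_set x \<inter> Blocks p" "xbar p x \<in> perms n"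
proof -
  have d: "distinct x" "set x = {1..n}" using perms_D[OF x] by auto
  have "(s,l) \<in> inv_set (xbar p x) \<longleftrightarrow> (s,l) \<in> inv_set x \<inter> Blocks p" for s l
  proof -
    have "(s,l) \<in> inv_set (xbar p x) \<longleftrightarrow> s < l \<and> bef (filter (\<lambda>a. a \<le> p) x @ filter (\<lambda>a. p < a) x) l s"
      unfolding xbar_facts(4)[OF x p] inv_set_bef by simp
    also have "\<dots> \<longleftrightarrow> s < l \<and> ((l \<le> p \<and> s \<le> p \<and> bef x l s) \<or> (p < l \<and> p < s \<and> bef x l s)
        \<or> (l \<in> set (filter (\<lambda>a. a \<le> p) x) \<and> s \<in> set (filter (\<lambda>a. p < a) x)))"
      unfolding bef_append bef_filter by blast
    also have "\<dots> \<longleftrightarrow> s < l \<and> bef x l s \<and> (l \<le> p \<or> p < s)"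
      by auto
    also have "\<dots> \<longleftrightarrow> (s,l) \<in> inv_set x \<inter> Blocks p"
      unfolding inv_set_bef Blocks_def by simp
    finally show ?thesis .
  qed
  then show "inv_set (xbar p x) = inv_set x \<inter> Blocks p" by auto
  show "xbar p x \<in> perms n"
    unfolding xbar_facts(4)[OF x p]
  proof (rule perms_I)
    have "set (filter (\<lambda>a. a \<le> p) x @ filter (\<lambda>a. p < a) x) = set x" by auto
    then show "set (filter (\<lambda>a. a \<le> p) x @ filter (\<lambda>a. p < a) x) = {1..n}" using d(2) by simp
    show "distinct (filter (\<lambda>a. a \<le> p) x @ filter (\<lambda>a. p < a) x)" using d(1) by auto
  qed
qed

lemma ptimes_bef: "bef (ptimes u v) a b \<longleftrightarrow> bef u a b \<or> (\<exists>a' b'. bef v a' b' \<and> a = length u + a' \<and> b = length u + b')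
   \<or> (a \<in> set u \<and> b \<in> (\<lambda>i. length u + i) ` set v)"
  unfolding ptimes_def bef_append bef_map by auto

lemma ptimes_perm: "u \<in> perms p \<Longrightarrow> v \<in> perms q \<Longrightarrow> ptimes u v \<in> perms (p + q)"
proof -
  assume u: "u \<in> perms p" and v: "v \<in> perms q"
  have du: "distinct u" "set u = {1..p}" "length u = p" using perms_D[OF u] by auto
  have dv: "distinct v" "set v = {1..q}" using perms_D[OF v] by auto
  have "(\<lambda>i. p + i) ` {1..q} = {p+1..p+q}"
  proof
    show "(\<lambda>i. p + i) ` {1..q} \<subseteq> {p+1..p+q}" by auto
    show "{p+1..p+q} \<subseteq> (\<lambda>i. p + i) ` {1..q}"
    proof
      fix b assume "b \<in> {p+1..p+q}"
      then have "b - p \<in> {1..q}" "b = p + (b - p)" by auto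
      then show "b \<in> (\<lambda>i. p + i) ` {1..q}" by blast
    qed
  qed
  then have "set (map (\<lambda>i. p + i) v) = {p+1..p+q}" using dv by simp
  moreover have "distinct (map (\<lambda>i. p + i) v)" using dv by (simp add: distinct_map)
  ultimately show ?thesis unfolding ptimes_def du(3) using du
    by (intro perms_I) auto
qed

lemma inv_ptimes: "u \<in> perms p \<Longrightarrow> inv_set (ptimes u v) = inv_set u \<union> {(p + s, p + l) | s l. (s,l) \<in> inv_set v}"
proof -
  assume u: "u \<in> perms p"
  have du: "set u = {1..p}" "length u = p" using perms_D[OF u] by auto
  show ?thesis unfolding inv_set_bef ptimes_bef du by auto
qed

lemma inv_ptimes_Blocks: "u \<in> perms p \<Longrightarrow> v \<in> perms q \<Longrightarrow> inv_set (ptimes u v) \<subseteq> Blocks p"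
proof -
  assume u: "u \<in> perms p" and v: "v \<in> perms q"
  have "inv_set u \<subseteq> Blocks p" using inv_Pn[OF u] unfolding Pn_def Blocks_def by auto
  moreover have "inv_set v \<subseteq> Pn q" using inv_Pn[OF v] .
  ultimately show ?thesis unfolding inv_ptimes[OF u] Blocks_def Pn_def by auto
qed

lemma ptimes_inj: "length u = length u' \<Longrightarrow> ptimes u v = ptimes u' v' \<Longrightarrow> u = u' \<and> v = v'"
  unfolding ptimes_def by (auto simp: inj_map_eq_map inj_def)

lemma weak_le_ptimes: "u \<in> perms p \<Longrightarrow> u' \<in> perms p \<Longrightarrow> weak_le u u' \<Longrightarrow> weak_le v v' \<Longrightarrow>
   weak_le (ptimes u v) (ptimes u' v')"
  unfolding weak_le_def by (auto simp: inv_ptimes)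

lemma block_form:
  assumes y: "y \<in> perms n" and p: "p \<le> n" and b: "inv_set y \<subseteq> Blocks p"
  shows "xbar p y = y"
  using inv_inj[OF inv_xbar(2)[OF y p] y] inv_xbar(1)[OF y p] b by blast

lemma Blocks_mp:
  "\<exists>m\<in>perms n. inv_set m = Pn n \<inter> Blocks p"
proof (rule realize)
  show "Pn n \<inter> Blocks p \<subseteq> Pn n" by simp
  show "trans (Pn n \<inter> Blocks p)" unfolding trans_def Pn_def Blocks_def by auto
  show "cotrans (Pn n \<inter> Blocks p)" unfolding cotrans_def Pn_def Blocks_def by auto
qed

lemma xbar_meet:
  assumes x: "x \<in> perms n" and p: "p \<le> n" and m: "m \<in> perms n" "inv_set m = Pn n \<inter> Blocks p"
  shows "is_meet n x m (xbar p x)"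
  unfolding is_meet_def weak_le_def
  using inv_xbar[OF x p] m inv_Pn[OF x] by auto


lemma swap_inv:
  assumes d: "distinct (pre @ a # b # post)" and ba: "b < a"
  shows "inv_set (pre @ b # a # post) = inv_set (pre @ a # b # post) - {(b,a)}"
proof -
  have "(s,l) \<in> inv_set (pre @ b # a # post) \<longleftrightarrow> (s,l) \<in> inv_set (pre @ a # b # post) - {(b,a)}" for s l
  proof -
    have "(s,l) \<in> inv_set (pre @ b # a # post) \<longleftrightarrow> s < l \<and> (bef pre l s \<or> (b = l \<and> (s = a \<or> s \<in> set post)) \<or> (a = l \<and> s \<in> set post) \<or> bef post l s
       \<or> (l \<in> set pre \<and> (s = b \<or> s = a \<or> s \<in> set post)))"
      unfolding inv_set_bef bef_append by auto
    also have "\<dots> \<longleftrightarrow> s < l \<and> (bef pre l s \<or> (a = l \<and> (s = b \<or> s \<in> set post)) \<or> (b = l \<and> s \<in> set post) \<or> bef post l s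
       \<or> (l \<in> set pre \<and> (s = a \<or> s = b \<or> s \<in> set post))) \<and> (s,l) \<noteq> (b,a)"
    proof -
      have "\<not> bef pre a b" "\<not> bef post a b" using d bef_set by fastforce+
      moreover have "\<not> (a \<in> set pre)" "b \<notin> set post" using d by auto
      ultimately show ?thesis using ba by auto
    qed
    also have "\<dots> \<longleftrightarrow> (s,l) \<in> inv_set (pre @ a # b # post) - {(b,a)}"
      unfolding inv_set_bef bef_append by auto
    finally show ?thesis .
  qed
  then show ?thesis by auto
qed

lemma bef_pos: "distinct w \<Longrightarrow> i < length w \<Longrightarrow> j < length w \<Longrightarrow> bef w (w!i) (w!j) \<longleftrightarrow> i < j"
proof
  assume "distinct w" "i < length w" "j < length w" "bef w (w!i) (w!j)"
  then obtain i' j' where "i' < j'" "j' < length w" "w!i' = w!i" "w!j' = w!j" unfolding bef_nth by blast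
  then show "i < j" using \<open>distinct w\<close> \<open>i < length w\<close> \<open>j < length w\<close> nth_eq_iff_index_eq by fastforce
next
  assume "distinct w" "i < length w" "j < length w" "i < j"
  then show "bef w (w!i) (w!j)" unfolding bef_nth by blast
qed

lemma inv_nth: "distinct w \<Longrightarrow> i < length w \<Longrightarrow> j < length w \<Longrightarrow> w!i < w!j \<Longrightarrow> (w!i, w!j) \<in> inv_set w \<longleftrightarrow> j < i"
  unfolding inv_set_bef using bef_pos by auto

lemma descent:
  assumes w: "w \<in> perms k" and m: "m \<in> perms k" and sub: "inv_set m \<subseteq> inv_set w" and ne: "inv_set m \<noteq> inv_set w"
  shows "\<exists>pre a b post. w = pre @ a # b # post \<and> b < a \<and> (b,a) \<notin> inv_set m"
proof (rule ccontr)
  assume H: "\<not> ?thesis"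
  have dw: "distinct w" "length w = k" using perms_D[OF w] by auto
  have mtr: "(a,b) \<in> inv_set m \<Longrightarrow> (b,c) \<in> inv_set m \<Longrightarrow> (a,c) \<in> inv_set m" for a b c
    using inv_trans[OF m] unfolding trans_def by blast
  have mco: "(a,c) \<in> inv_set m \<Longrightarrow> a < b \<Longrightarrow> b < c \<Longrightarrow> (a,b) \<in> inv_set m \<or> (b,c) \<in> inv_set m" for a b c
    using inv_cotrans[OF m] unfolding cotrans_def by blast
  have adj: "(w!Suc i, w!i) \<in> inv_set m" if "Suc i < k" "w!Suc i < w!i" for i
  proof -
    have "w = take i w @ w!i # w!Suc i # drop (Suc (Suc i)) w"
      using that dw by (metis Cons_nth_drop_Suc Suc_lessD append_take_drop_id)
    then show ?thesis using H that by blast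
  qed
  have main: "\<forall>j. j + Suc d < k \<longrightarrow> w!(j + Suc d) < w!j \<longrightarrow> (w!(j + Suc d), w!j) \<in> inv_set m" for d
  proof (induction d)
    case 0 then show ?case using adj by simp
  next
    case (Suc d)
    show ?case
    proof (intro allI impI)
      fix j assume j: "j + Suc (Suc d) < k" "w!(j + Suc (Suc d)) < w!j"
      define i where "i = j + Suc (Suc d)"
      define s where "s = w!i"
      define l where "l = w!j"
      define c where "c = w!Suc j"
      have ik: "i < k" "Suc j < k" "j < k" using j unfolding i_def by auto
      have sl: "s < l" using j unfolding s_def l_def i_def by simp
      have cs: "c \<noteq> s" unfolding c_def s_def using dw ik nth_eq_iff_index_eq unfolding i_def by fastforce
      have cl: "c \<noteq> l" unfolding c_def l_def using dw ik nth_eq_iff_index_eq by fastforce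
      have bef_lc: "bef w l c" unfolding l_def c_def using bef_pos dw ik by auto
      have bef_cs: "bef w c s" unfolding c_def s_def using bef_pos dw ik unfolding i_def by auto
      have notinv: "(x,y) \<notin> inv_set m" if "bef w x y" for x y
      proof
        assume "(x,y) \<in> inv_set m"
        then have "bef w y x" using sub unfolding inv_set_bef by auto
        then show False using that bef_distinct_asym dw by blast
      qed
      show "(w!(j + Suc (Suc d)), w!j) \<in> inv_set m"
      proof (cases "s < c")
        case True
        have "(s, c) \<in> inv_set m" using Suc.IH[rule_format, of "Suc j"] j True
          unfolding s_def c_def i_def by simp
        show ?thesis
        proof (cases "l < c")
          case True
          then have "(s,l) \<in> inv_set m \<or> (l,c) \<in> inv_set m" using mco \<open>(s,c) \<in> inv_set m\<close> sl by blast
          then have "(s,l) \<in> inv_set m" using notinv[OF bef_lc] by blast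
          then show ?thesis unfolding s_def l_def i_def .
        next
          case False
          then have "c < l" using cl by simp
          then have "(c,l) \<in> inv_set m" using adj[of j] ik unfolding c_def l_def by simp
          then have "(s,l) \<in> inv_set m" using mtr \<open>(s,c) \<in> inv_set m\<close> by blast
          then show ?thesis unfolding s_def l_def i_def .
        qed
      next
        case False
        then have "c < s" using cs by simp
        then have "(c,l) \<in> inv_set m" using adj[of j] ik sl unfolding c_def l_def by simp
        then have "(c,s) \<in> inv_set m \<or> (s,l) \<in> inv_set m" using mco \<open>c < s\<close> sl by blast
        then have "(s,l) \<in> inv_set m" using notinv[OF bef_cs] by blast
        then show ?thesis unfolding s_def l_def i_def .
      qed
    qed
  qed
  have "inv_set w \<subseteq> inv_set m"
  proof
    fix x assume "x \<in> inv_set w"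
    then obtain i j where ij: "x = (w!i, w!j)" "j < i" "i < length w" "w!i < w!j"
      unfolding inv_set_def by blast
    then have "j + Suc (i - j - 1) = i" by simp
    then show "x \<in> inv_set m" using main[of "i - j - 1"] ij dw by metis
  qed
  then show False using sub ne by blast
qed


lemma move1:
  assumes d: "distinct (pre @ a # mid @ b # post)" and ba: "b < a" and mid: "\<forall>c\<in>set mid. a < c"
  shows "inv_set (pre @ a # mid @ b # post) - {(b,a)} \<subseteq> inv_set (pre @ mid @ b # a # post)"
    "(b,a) \<notin> inv_set (pre @ mid @ b # a # post)"
proof -
  let ?z = "pre @ a # mid @ b # post" and ?t = "pre @ mid @ b # a # post"
  have dt: "distinct ?t" using d by auto
  have bz: "bef ?z x y \<longleftrightarrow> bef pre x y \<or> (x \<in> set pre \<and> (y = a \<or> y \<in> set mid \<or> y = b \<or> y \<in> set post))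
     \<or> (x = a \<and> (y \<in> set mid \<or> y = b \<or> y \<in> set post)) \<or> bef mid x y \<or> (x \<in> set mid \<and> (y = b \<or> y \<in> set post))
     \<or> (x = b \<and> y \<in> set post) \<or> bef post x y" for x y
    by (auto simp: bef_append)
  have bt: "bef ?t x y \<longleftrightarrow> bef pre x y \<or> (x \<in> set pre \<and> (y \<in> set mid \<or> y = b \<or> y = a \<or> y \<in> set post))
     \<or> bef mid x y \<or> (x \<in> set mid \<and> (y = b \<or> y = a \<or> y \<in> set post))
     \<or> (x = b \<and> (y = a \<or> y \<in> set post)) \<or> (x = a \<and> y \<in> set post) \<or> bef post x y" for x y
    by (auto simp: bef_append)
  show "inv_set ?z - {(b,a)} \<subseteq> inv_set ?t"
  proof
    fix x assume "x \<in> inv_set ?z - {(b,a)}"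
    then obtain s l where x: "x = (s,l)" "s < l" "bef ?z l s" "(s,l) \<noteq> (b,a)" unfolding inv_set_bef by auto
    have "bef ?t l s"
    proof -
      have "\<not> (l = a \<and> s \<in> set mid)" using mid x by auto
      then show ?thesis using x(3,4) unfolding bz bt by blast
    qed
    then show "x \<in> inv_set ?t" using x unfolding inv_set_bef by auto
  qed
  have "bef ?t b a" unfolding bt by simp
  then have "\<not> bef ?t a b" using bef_distinct_asym dt by blast
  then show "(b,a) \<notin> inv_set ?t" unfolding inv_set_bef by auto
qed

lemma move2:
  assumes d: "distinct (pre @ a # mid @ b # post)" and ba: "b < a" and mid: "\<forall>c\<in>set mid. c < b"
  shows "inv_set (pre @ a # mid @ b # post) - {(b,a)} \<subseteq> inv_set (pre @ b # a # mid @ post)"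
    "(b,a) \<notin> inv_set (pre @ b # a # mid @ post)"
proof -
  let ?z = "pre @ a # mid @ b # post" and ?t = "pre @ b # a # mid @ post"
  have dt: "distinct ?t" using d by auto
  have bz: "bef ?z x y \<longleftrightarrow> bef pre x y \<or> (x \<in> set pre \<and> (y = a \<or> y \<in> set mid \<or> y = b \<or> y \<in> set post))
     \<or> (x = a \<and> (y \<in> set mid \<or> y = b \<or> y \<in> set post)) \<or> bef mid x y \<or> (x \<in> set mid \<and> (y = b \<or> y \<in> set post))
     \<or> (x = b \<and> y \<in> set post) \<or> bef post x y" for x y
    by (auto simp: bef_append)
  have bt: "bef ?t x y \<longleftrightarrow> bef pre x y \<or> (x \<in> set pre \<and> (y = b \<or> y = a \<or> y \<in> set mid \<or> y \<in> set post))
     \<or> (x = b \<and> (y = a \<or> y \<in> set mid \<or> y \<in> set post)) \<or> (x = a \<and> (y \<in> set mid \<or> y \<in> set post))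
     \<or> bef mid x y \<or> (x \<in> set mid \<and> y \<in> set post) \<or> bef post x y" for x y
    by (auto simp: bef_append)
  show "inv_set ?z - {(b,a)} \<subseteq> inv_set ?t"
  proof
    fix x assume "x \<in> inv_set ?z - {(b,a)}"
    then obtain s l where x: "x = (s,l)" "s < l" "bef ?z l s" "(s,l) \<noteq> (b,a)" unfolding inv_set_bef by auto
    have "bef ?t l s"
    proof -
      have "\<not> (l \<in> set mid \<and> s = b)" using mid x by auto
      then show ?thesis using x(3,4) unfolding bz bt by blast
    qed
    then show "x \<in> inv_set ?t" using x unfolding inv_set_bef by auto
  qed
  have "bef ?t b a" unfolding bt by simp
  then have "\<not> bef ?t a b" using bef_distinct_asym dt by blast
  then show "(b,a) \<notin> inv_set ?t" unfolding inv_set_bef by auto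
qed


lemma lemA:
  assumes lc: "lattice_congruence n R"
    and z: "z \<in> perms n" "\<forall>w. R z w \<longrightarrow> weak_le z w"
    and yy: "y \<in> perms n" "t \<in> perms n" "R y' y"
    and ba: "(b,a) \<in> inv_set y" "(b,a) \<in> inv_set z" "inv_set y' \<subseteq> inv_set z - {(b,a)}"
    and t: "inv_set z - {(b,a)} \<subseteq> inv_set t" "(b,a) \<notin> inv_set t"
  shows False
proof -
  have y'p: "y' \<in> perms n" using lc_perm[OF lc yy(3)] by simp
  have "weak_le y' t" unfolding weak_le_def using ba(3) t(1) by blast
  then have j1: "is_join n y' t t" by (rule join_le[OF y'p yy(2)])
  obtain J where J: "is_join n y t J" using join_exists[OF yy(1) yy(2)] by blast
  have RtJ: "R t J" by (rule lc_join[OF lc yy(3) lc_refl[OF lc yy(2)] j1 J])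
  have Jp: "J \<in> perms n" using join_ub[OF J] by simp
  have "inv_set y \<subseteq> inv_set J" "inv_set t \<subseteq> inv_set J" using join_ub[OF J] unfolding weak_le_def by auto
  then have "weak_le z J" unfolding weak_le_def using ba(1) t(1) by blast
  then have m1: "is_meet n z J z" by (rule meet_le[OF z(1) Jp])
  obtain M where M: "is_meet n z t M" using meet_exists[OF z(1) yy(2)] by blast
  have "R z M" by (rule lc_meet[OF lc lc_refl[OF lc z(1)] lc_sym[OF lc RtJ] m1 M])
  then have "weak_le z M" using z(2) by blast
  moreover have "weak_le M t" using meet_lb[OF M] by simp
  ultimately have "inv_set z \<subseteq> inv_set t" unfolding weak_le_def by blast
  then show False using ba(2) t(2) by blast
qed

lemma bef_split: "bef xs a b \<Longrightarrow> \<exists>pre mid post. xs = pre @ a # mid @ b # post"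
proof (induction xs)
  case Nil then show ?case by simp
next
  case (Cons x xs)
  show ?case
  proof (cases "x = a \<and> b \<in> set xs")
    case True
    then obtain mid post where "xs = mid @ b # post" using split_list by metis
    then show ?thesis using True by (intro exI[of _ "[]"] exI[of _ mid] exI[of _ post]) auto
  next
    case False
    then have "bef xs a b" using Cons.prems by auto
    then obtain pre mid post where "xs = pre @ a # mid @ b # post" using Cons.IH by blast
    then show ?thesis by (intro exI[of _ "x # pre"] exI[of _ mid] exI[of _ post]) auto
  qed
qed

lemma core:
  assumes lc: "lattice_congruence n R"
    and z: "z \<in> perms n" "\<forall>w. R z w \<longrightarrow> weak_le z w" and p: "p \<le> n"
    and y: "xbar p z = pre @ a # b # post" and ba: "b < a" and blk: "a \<le> p \<longleftrightarrow> b \<le> p"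
    and R: "R (pre @ b # a # post) (xbar p z)"
  shows False
proof -
  let ?y = "xbar p z" and ?y' = "pre @ b # a # post"
  have yp: "?y \<in> perms n" and invy: "inv_set ?y = inv_set z \<inter> Blocks p" using inv_xbar[OF z(1) p] by auto
  have dy: "distinct (pre @ a # b # post)" using perms_D[OF yp] y by simp
  have "bef ?y a b" unfolding y by (simp add: bef_append)
  then have bay: "(b,a) \<in> inv_set ?y" unfolding inv_set_bef using ba by simp
  then have baz: "(b,a) \<in> inv_set z" using invy by simp
  have y'p: "?y' \<in> perms n" using lc_perm[OF lc R] by simp
  have invy': "inv_set ?y' = inv_set ?y - {(b,a)}" unfolding y by (rule swap_inv[OF dy ba])
  have sub: "inv_set ?y' \<subseteq> inv_set z - {(b,a)}" using invy' invy by blast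
  have "bef z a b" using baz unfolding inv_set_bef by simp
  then obtain pre' mid post' where zs: "z = pre' @ a # mid @ b # post'" using bef_split by blast
  have dz: "distinct (pre' @ a # mid @ b # post')" "set z = {1..n}" using perms_D[OF z(1)] zs by auto
  have yfilt: "?y = filter (\<lambda>a. a \<le> p) z @ filter (\<lambda>a. p < a) z" using xbar_facts(4)[OF z(1) p] .
  have midblk: "\<not> (c \<le> p \<longleftrightarrow> a \<le> p)" if "c \<in> set mid" for c
  proof
    assume cb: "c \<le> p \<longleftrightarrow> a \<le> p"
    have "bef z a c" "bef z c b" unfolding zs using that by (auto simp: bef_append)
    then have "bef ?y a c" "bef ?y c b" unfolding yfilt bef_append bef_filter using cb blk by auto
    moreover have "c \<noteq> a" "c \<noteq> b" using dz(1) that by auto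
    ultimately show False using dy unfolding y by (auto simp: bef_append dest: bef_set)
  qed
  show False
  proof (cases "a \<le> p")
    case True
    have mid: "\<forall>c\<in>set mid. a < c" using midblk True by force
    let ?t = "pre' @ mid @ b # a # post'"
    have tp: "?t \<in> perms n" using dz zs by (intro perms_I) auto
    show False using lemA[OF lc z yp tp R bay baz sub] move1[OF dz(1) ba mid] zs by simp
  next
    case False
    have mid: "\<forall>c\<in>set mid. c < b" using midblk False blk by force
    let ?t = "pre' @ b # a # mid @ post'"
    have tp: "?t \<in> perms n" using dz zs by (intro perms_I) auto
    show False using lemA[OF lc z yp tp R bay baz sub] move2[OF dz(1) ba mid] zs by simp
  qed
qed


definition ismin :: "(nat \<Rightarrow> nat list \<Rightarrow> nat list \<Rightarrow> bool) \<Rightarrow> nat \<Rightarrow> nat list \<Rightarrow> bool" where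
  "ismin \<Theta> k x \<longleftrightarrow> (\<forall>w. \<Theta> k x w \<longrightarrow> weak_le x w)"

context
  fixes \<Theta> :: "nat \<Rightarrow> nat list \<Rightarrow> nat list \<Rightarrow> bool"
  assumes cong: "\<And>n. lattice_congruence n (\<Theta> n)"
    and tr: "translational \<Theta>"
begin

lemma trD: "u \<in> perms p \<Longrightarrow> u' \<in> perms p \<Longrightarrow> v \<in> perms q \<Longrightarrow> v' \<in> perms q \<Longrightarrow>
   \<Theta> (p+q) (ptimes u v) (ptimes u' v') \<longleftrightarrow> \<Theta> p u u' \<and> \<Theta> q v v'"
  using tr unfolding translational_def by blast

lemma lemC:
  assumes u: "u \<in> perms p" "ismin \<Theta> p u" and v: "v \<in> perms q" "ismin \<Theta> q v"
  shows "ismin \<Theta> (p+q) (ptimes u v)"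
  unfolding ismin_def
proof (intro allI impI)
  fix y assume Ry: "\<Theta> (p+q) (ptimes u v) y"
  let ?n = "p + q" and ?uv = "ptimes u v"
  have uvp: "?uv \<in> perms ?n" by (rule ptimes_perm[OF u(1) v(1)])
  have yp: "y \<in> perms ?n" using lc_perm[OF cong Ry] by simp
  obtain M where M: "is_meet ?n y ?uv M" using meet_exists[OF yp uvp] by blast
  have m2: "is_meet ?n ?uv ?uv ?uv" by (rule meet_le[OF uvp uvp weak_le_refl])
  have RM: "\<Theta> ?n M ?uv" by (rule lc_meet[OF cong lc_sym[OF cong Ry] lc_refl[OF cong uvp] M m2])
  have Mp: "M \<in> perms ?n" "weak_le M ?uv" "weak_le M y" using meet_lb[OF M] by auto
  have "inv_set M \<subseteq> Blocks p" using Mp(2) inv_ptimes_Blocks[OF u(1) v(1)] unfolding weak_le_def by blast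
  then have "xbar p M = M" using block_form[OF Mp(1)] by simp
  then have Meq: "M = ptimes (lowp p M) (highp p M)" using xbar_facts(3)[OF Mp(1)] by simp
  have lp: "lowp p M \<in> perms p" using xbar_facts(1)[OF Mp(1), of p] by simp
  have hp: "highp p M \<in> perms q" using xbar_facts(2)[OF Mp(1), of p] by simp
  have "\<Theta> ?n (ptimes (lowp p M) (highp p M)) ?uv" using RM Meq by simp
  then have "\<Theta> p (lowp p M) u" "\<Theta> q (highp p M) v" using trD[OF lp u(1) hp v(1)] by auto
  then have "weak_le u (lowp p M)" "weak_le v (highp p M)"
    using u(2) v(2) lc_sym[OF cong] unfolding ismin_def by blast+
  then have "weak_le ?uv M" using weak_le_ptimes[OF u(1) lp] Meq by metis
  then show "weak_le ?uv y" using Mp(3) weak_le_trans by blast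
qed

lemma lemD:
  assumes z: "z \<in> perms n" "ismin \<Theta> n z" and p: "p \<le> n"
  shows "ismin \<Theta> n (xbar p z)"
proof -
  define q where "q = n - p"
  have n: "n = p + q" using p unfolding q_def by simp
  let ?l = "lowp p z" and ?h = "highp p z"
  have lp: "?l \<in> perms p" using xbar_facts(1)[OF z(1) p] by simp
  have hp: "?h \<in> perms q" using xbar_facts(2)[OF z(1) p] unfolding q_def by simp
  have xe: "xbar p z = ptimes ?l ?h" using xbar_facts(3)[OF z(1) p] by simp
  have zm: "\<forall>w. \<Theta> n z w \<longrightarrow> weak_le z w" using z(2) unfolding ismin_def by simp
  have nonmin: "\<exists>pre a b post. w = pre @ a # b # post \<and> b < a \<and> \<Theta> k (pre @ b # a # post) w"
    if w: "w \<in> perms k" "\<not> ismin \<Theta> k w" for w k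
  proof -
    obtain m where m: "\<Theta> k m w" "\<forall>x. \<Theta> k m x \<longrightarrow> weak_le m x" using class_min[OF cong w(1)] by blast
    have mp: "m \<in> perms k" using lc_perm[OF cong m(1)] by simp
    have mw: "weak_le m w" using m by blast
    have "m \<noteq> w" using m w(2) unfolding ismin_def by blast
    then have ne: "inv_set m \<noteq> inv_set w" using inv_inj[OF mp w(1)] by blast
    obtain pre a b post where d: "w = pre @ a # b # post" "b < a" "(b,a) \<notin> inv_set m"
      using descent[OF w(1) mp _ ne] mw unfolding weak_le_def by blast
    have dw: "distinct (pre @ a # b # post)" "set w = {1..k}" using perms_D[OF w(1)] d by auto
    have w'p: "pre @ b # a # post \<in> perms k" using dw d by (intro perms_I) auto
    have inv': "inv_set (pre @ b # a # post) = inv_set w - {(b,a)}" using swap_inv[OF dw(1) d(2)] d by simp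
    have "weak_le m (pre @ b # a # post)" using mw d(3) inv' unfolding weak_le_def by blast
    moreover have "weak_le (pre @ b # a # post) w" using inv' unfolding weak_le_def by blast
    ultimately have "\<Theta> k (pre @ b # a # post) w" using lc_interval[OF cong m(1) w'p] by blast
    then show ?thesis using d by blast
  qed
  have lmin: "ismin \<Theta> p ?l"
  proof (rule ccontr)
    assume "\<not> ismin \<Theta> p ?l"
    then obtain pre a b post where d: "?l = pre @ a # b # post" "b < a" "\<Theta> p (pre @ b # a # post) ?l"
      using nonmin[OF lp] by blast
    have l'p: "pre @ b # a # post \<in> perms p" using lc_perm[OF cong d(3)] by simp
    have "\<Theta> n (ptimes (pre @ b # a # post) ?h) (ptimes ?l ?h)"
      using trD[OF l'p lp hp hp] d(3) lc_refl[OF cong hp] n by simp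
    moreover have "length ?l = p" "length (pre @ b # a # post) = p" using perms_D[OF lp] perms_D[OF l'p] by simp_all
    moreover have "a \<le> p" "b \<le> p" using perms_D[OF lp] d(1) by auto
    ultimately show False using core[OF cong[of n] z(1) zm p, of pre a b "post @ map (\<lambda>i. p + i) ?h"] xe d(1,2)
      unfolding ptimes_def by auto
  qed
  have hmin: "ismin \<Theta> q ?h"
  proof (rule ccontr)
    assume "\<not> ismin \<Theta> q ?h"
    then obtain pre a b post where d: "?h = pre @ a # b # post" "b < a" "\<Theta> q (pre @ b # a # post) ?h"
      using nonmin[OF hp] by blast
    have h'p: "pre @ b # a # post \<in> perms q" using lc_perm[OF cong d(3)] by simp
    have "\<Theta> n (ptimes ?l (pre @ b # a # post)) (ptimes ?l ?h)"
      using trD[OF lp lp h'p hp] d(3) lc_refl[OF cong lp] n by simp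
    moreover have "length ?l = p" using perms_D[OF lp] by simp
    moreover have "1 \<le> a" "1 \<le> b" using perms_D[OF hp] d(1) by auto
    ultimately show False
      using core[OF cong[of n] z(1) zm p, of "?l @ map (\<lambda>i. p + i) pre" "p + a" "p + b" "map (\<lambda>i. p + i) post"] xe d(1,2)
      unfolding ptimes_def by auto
  qed
  show ?thesis using lemC[OF lp lmin hp hmin] xe n by simp
qed

lemma key:
  assumes x: "x \<in> perms n" and z0: "\<Theta> n z0 x" "ismin \<Theta> n z0" and u: "u \<in> perms p" "ismin \<Theta> p u"
    and v: "v \<in> perms q" "ismin \<Theta> q v" and n: "n = p + q"
  shows "xbar p z0 = ptimes u v \<longleftrightarrow> \<Theta> n (ptimes u v) (xbar p x)"
proof -
  have p: "p \<le> n" using n by simp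
  have z0p: "z0 \<in> perms n" using lc_perm[OF cong z0(1)] by simp
  obtain mp where mp: "mp \<in> perms n" "inv_set mp = Pn n \<inter> Blocks p" using Blocks_mp by blast
  have R: "\<Theta> n (xbar p z0) (xbar p x)"
    by (rule lc_meet[OF cong z0(1) lc_refl[OF cong mp(1)] xbar_meet[OF z0p p mp] xbar_meet[OF x p mp]])
  show ?thesis
  proof
    assume "xbar p z0 = ptimes u v"
    then show "\<Theta> n (ptimes u v) (xbar p x)" using R by simp
  next
    assume h: "\<Theta> n (ptimes u v) (xbar p x)"
    have R2: "\<Theta> n (xbar p z0) (ptimes u v)" using lc_trans[OF cong R lc_sym[OF cong h]] .
    have m1: "ismin \<Theta> n (xbar p z0)" by (rule lemD[OF z0p z0(2) p])
    have m2: "ismin \<Theta> n (ptimes u v)" using lemC[OF u v] n by simp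
    have "weak_le (xbar p z0) (ptimes u v)" using m1 R2 unfolding ismin_def by blast
    moreover have "weak_le (ptimes u v) (xbar p z0)" using m2 lc_sym[OF cong R2] unfolding ismin_def by blast
    ultimately show "xbar p z0 = ptimes u v" using weak_le_antisym lc_perm[OF cong R2] by blast
  qed
qed

end


lemma sum_single: "finite A \<Longrightarrow> (\<And>y. y \<in> A \<Longrightarrow> y \<noteq> a \<Longrightarrow> f y = 0) \<Longrightarrow> sum f A = (if a \<in> A then f a else 0)"
proof -
  assume A: "finite A" and z: "\<And>y. y \<in> A \<Longrightarrow> y \<noteq> a \<Longrightarrow> f y = 0"
  have "sum f A = sum (\<lambda>y. if y = a then f y else 0) A" by (rule sum.cong) (auto simp: z)
  also have "\<dots> = (if a \<in> A then f a else 0)" using A by simp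
  finally show ?thesis .
qed

lemma Zset_perms: "Zset \<Theta> n \<subseteq> perms n" unfolding Zset_def by auto
lemma finite_Zset: "finite (Zset \<Theta> n)" using finite_subset[OF Zset_perms finite_perms] .
lemma Zset_len: "x \<in> Zset \<Theta> n \<Longrightarrow> length x = n" using Zset_perms perms_D by blast
lemma Zset_ismin: "x \<in> Zset \<Theta> n \<longleftrightarrow> x \<in> perms n \<and> ismin \<Theta> n x" unfolding Zset_def ismin_def by simp

lemma cmap_basis: "cmap \<Theta> (basis u :: nat list \<Rightarrow> 'k::field) w =
   (if u \<in> Zset \<Theta> (length w) \<and> \<Theta> (length w) u w then 1 else 0)"
proof -
  have fin: "finite {z \<in> Zset \<Theta> (length w). \<Theta> (length w) z w}" using finite_Zset by simp
  show ?thesis unfolding cmap_def basis_def using sum.delta[OF fin, of u "\<lambda>_. 1::'k"] by simp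
qed

theorem theorem1p2:
  fixes \<Theta> :: "nat \<Rightarrow> nat list \<Rightarrow> nat list \<Rightarrow> bool"
  assumes cong: "\<And>n. lattice_congruence n (\<Theta> n)"
    and trans: "translational \<Theta>"
  shows "(\<forall>p q u v. u \<in> Zset \<Theta> p \<longrightarrow> v \<in> Zset \<Theta> q \<longrightarrow>
            cmap \<Theta> (mulZ \<Theta> (basis u) (basis v) :: nat list \<Rightarrow> 'k::field)
              = mulS (cmap \<Theta> (basis u)) (cmap \<Theta> (basis v)))
         \<and> inj_on (cmap \<Theta> :: (nat list \<Rightarrow> 'k) \<Rightarrow> _) (KZ \<Theta>)"
proof
  have single_class: "{z \<in> Zset \<Theta> n. \<Theta> n z x} = {z0}"
    if "z0 \<in> Zset \<Theta> n" "\<Theta> n z0 x" for z0 x n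
  proof
    show "{z0} \<subseteq> {z \<in> Zset \<Theta> n. \<Theta> n z x}" using that by simp
    show "{z \<in> Zset \<Theta> n. \<Theta> n z x} \<subseteq> {z0}"
    proof
      fix z assume "z \<in> {z \<in> Zset \<Theta> n. \<Theta> n z x}"
      then have zz: "z \<in> Zset \<Theta> n" "\<Theta> n z x" by auto
      have "\<forall>w. \<Theta> n z w \<longrightarrow> weak_le z w" "\<forall>w. \<Theta> n z0 w \<longrightarrow> weak_le z0 w"
        using zz(1) that(1) unfolding Zset_def by auto
      then have "z = z0" using min_unique[OF cong[of n] zz(2) that(2)] by blast
      then show "z \<in> {z0}" by simp
    qed
  qed
  show "\<forall>p q u v. u \<in> Zset \<Theta> p \<longrightarrow> v \<in> Zset \<Theta> q \<longrightarrow>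
            cmap \<Theta> (mulZ \<Theta> (basis u) (basis v) :: nat list \<Rightarrow> 'k::field)
              = mulS (cmap \<Theta> (basis u)) (cmap \<Theta> (basis v))"
  proof (intro allI impI ext)
    fix p q :: nat and u v x :: "nat list"
    assume u: "u \<in> Zset \<Theta> p" and v: "v \<in> Zset \<Theta> q"
    define n where "n = length x"
    have lu: "length u = p" and lv: "length v = q" using Zset_len u v by blast+
    have uZ: "u \<in> Zset \<Theta> p' \<longleftrightarrow> p' = p" for p' using Zset_len[of u \<Theta> p'] lu u by blast
    have vZ: "v \<in> Zset \<Theta> q' \<longleftrightarrow> q' = q" for q' using Zset_len[of v \<Theta> q'] lv v by blast
    show "cmap \<Theta> (mulZ \<Theta> (basis u) (basis v) :: nat list \<Rightarrow> 'k::field) x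
              = mulS (cmap \<Theta> (basis u)) (cmap \<Theta> (basis v)) x"
    proof (cases "x \<in> perms n")
      case False
      have E: "{z \<in> Zset \<Theta> n. \<Theta> n z x} = {}" using False lc_perm[OF cong] by blast
      have "cmap \<Theta> (mulZ \<Theta> (basis u) (basis v) :: nat list \<Rightarrow> 'k::field) x = 0"
        unfolding cmap_def n_def[symmetric] unfolding E by simp
      moreover have "mulS (cmap \<Theta> (basis u)) (cmap \<Theta> (basis v)) x = (0::'k)"
        unfolding mulS_def n_def[symmetric] using False by simp
      ultimately show ?thesis by simp
    next
      case True
      obtain z0 where z0: "\<Theta> n z0 x" "\<forall>w. \<Theta> n z0 w \<longrightarrow> weak_le z0 w" using class_min[OF cong True] by blast
      have z0p: "z0 \<in> perms n" using lc_perm[OF cong z0(1)] by simp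
      have z0Z: "z0 \<in> Zset \<Theta> n" unfolding Zset_def using z0p z0(2) by simp
      have lz0: "length z0 = n" using perms_D[OF z0p] by simp
      have inner: "(\<Sum>u'\<in>Zset \<Theta> p'. \<Sum>v'\<in>Zset \<Theta> (n - p').
          (if xbar p' z0 = ptimes u' v' then basis u u' * basis v v' else (0::'k)))
        = (if p' = p \<and> n - p' = q \<and> xbar p' z0 = ptimes u v then 1 else 0)" for p'
      proof -
        have "(\<Sum>v'\<in>Zset \<Theta> (n - p'). (if xbar p' z0 = ptimes u' v' then basis u u' * basis v v' else (0::'k)))
          = (if v \<in> Zset \<Theta> (n - p') then (if xbar p' z0 = ptimes u' v then basis u u' * basis v v else 0) else 0)"
          for u'
          by (rule sum_single[OF finite_Zset]) (simp add: basis_def)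
        then have "(\<Sum>u'\<in>Zset \<Theta> p'. \<Sum>v'\<in>Zset \<Theta> (n - p').
          (if xbar p' z0 = ptimes u' v' then basis u u' * basis v v' else (0::'k)))
          = (\<Sum>u'\<in>Zset \<Theta> p'. (if v \<in> Zset \<Theta> (n - p') then (if xbar p' z0 = ptimes u' v then basis u u' * basis v v else 0) else 0))"
          by simp
        also have "\<dots> = (if u \<in> Zset \<Theta> p' then (if v \<in> Zset \<Theta> (n - p') then (if xbar p' z0 = ptimes u v then basis u u * basis v v else 0) else 0) else 0)"
          by (rule sum_single[OF finite_Zset]) (simp add: basis_def)
        also have "\<dots> = (if p' = p \<and> n - p' = q \<and> xbar p' z0 = ptimes u v then 1 else 0)"
          unfolding uZ vZ by (simp add: basis_def)
        finally show ?thesis .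
      qed
      have "mulZ \<Theta> (basis u) (basis v) z0 = (\<Sum>p'\<in>{0..n}. if p' = p \<and> n - p' = q \<and> xbar p' z0 = ptimes u v then 1 else (0::'k))"
        unfolding mulZ_def lz0 using z0Z inner by simp
      also have "\<dots> = (if n = p + q \<and> xbar p z0 = ptimes u v then 1 else 0)"
        by (subst sum_single[where a = p]) auto
      finally have L: "mulZ \<Theta> (basis u) (basis v) z0 = (if n = p + q \<and> xbar p z0 = ptimes u v then 1 else (0::'k))" .
      have "cmap \<Theta> (mulZ \<Theta> (basis u) (basis v) :: nat list \<Rightarrow> 'k::field) x = mulZ \<Theta> (basis u) (basis v) z0"
        unfolding cmap_def n_def[symmetric] single_class[OF z0Z z0(1)] by simp
      with L have LHS: "cmap \<Theta> (mulZ \<Theta> (basis u) (basis v) :: nat list \<Rightarrow> 'k::field) x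
         = (if n = p + q \<and> xbar p z0 = ptimes u v then 1 else 0)" by simp
      define cu where "cu = (cmap \<Theta> (basis u) :: nat list \<Rightarrow> 'k)"
      define cv where "cv = (cmap \<Theta> (basis v) :: nat list \<Rightarrow> 'k)"
      have cu: "cu w = (if length w = p \<and> \<Theta> p u w then 1 else 0)" for w
        unfolding cu_def cmap_basis uZ by auto
      have cv: "cv w = (if length w = q \<and> \<Theta> q v w then 1 else 0)" for w
        unfolding cv_def cmap_basis vZ by auto
      have innerR: "(\<Sum>u'\<in>perms p'. \<Sum>v'\<in>perms (n - p').
          (if xbar p' x = ptimes u' v' then cu u' * cv v' else 0))
        = cu (lowp p' x) * cv (highp p' x)" if p': "p' \<le> n" for p'
      proof -
        have xf: "lowp p' x \<in> perms p'" "highp p' x \<in> perms (n - p')" "xbar p' x = ptimes (lowp p' x) (highp p' x)"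
          using xbar_facts[OF True p'] by auto
        have ll: "length (lowp p' x) = p'" using perms_D[OF xf(1)] by simp
        have "(\<Sum>v'\<in>perms (n - p'). (if xbar p' x = ptimes u' v' then cu u' * cv v' else 0))
          = (if xbar p' x = ptimes u' (highp p' x) then cu u' * cv (highp p' x) else 0)" if "u' \<in> perms p'" for u'
        proof -
          have lu': "length u' = p'" using perms_D[OF that] by simp
          have "(\<Sum>v'\<in>perms (n - p'). (if xbar p' x = ptimes u' v' then cu u' * cv v' else 0))
            = (if highp p' x \<in> perms (n - p') then (if xbar p' x = ptimes u' (highp p' x) then cu u' * cv (highp p' x) else 0) else 0)"
            by (rule sum_single[OF finite_perms]) (use xf(3) ptimes_inj lu' ll in metis)
          then show ?thesis using xf(2) by simp
        qed
        then have "(\<Sum>u'\<in>perms p'. \<Sum>v'\<in>perms (n - p'). (if xbar p' x = ptimes u' v' then cu u' * cv v' else 0))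
          = (\<Sum>u'\<in>perms p'. (if xbar p' x = ptimes u' (highp p' x) then cu u' * cv (highp p' x) else 0))"
          by (rule sum.cong[OF refl])
        also have "\<dots> = (if lowp p' x \<in> perms p' then (if xbar p' x = ptimes (lowp p' x) (highp p' x) then cu (lowp p' x) * cv (highp p' x) else 0) else 0)"
          by (rule sum_single[OF finite_perms]) (use xf(3) ptimes_inj ll perms_D in metis)
        also have "\<dots> = cu (lowp p' x) * cv (highp p' x)" using xf by simp
        finally show ?thesis .
      qed
      have "mulS cu cv x = (\<Sum>p'\<in>{0..n}. cu (lowp p' x) * cv (highp p' x))"
        unfolding mulS_def n_def[symmetric] using True innerR by simp
      also have "\<dots> = (if p \<in> {0..n} then cu (lowp p x) * cv (highp p x) else 0)"
      proof (rule sum_single)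
        fix p' assume "p' \<in> {0..n}" "p' \<noteq> p"
        then have "length (lowp p' x) \<noteq> p" using xbar_facts(1)[OF True, of p'] perms_D by force
        then show "cu (lowp p' x) * cv (highp p' x) = 0" using cu by simp
      qed simp
      also have "\<dots> = (if n = p + q \<and> \<Theta> n (ptimes u v) (xbar p x) then 1 else 0)"
      proof (cases "p \<le> n")
        case True': True
        have xf: "lowp p x \<in> perms p" "highp p x \<in> perms (n - p)" "xbar p x = ptimes (lowp p x) (highp p x)"
          using xbar_facts[OF True True'] by auto
        have up: "u \<in> perms p" and vp: "v \<in> perms q" using u v Zset_perms by blast+
        show ?thesis
        proof (cases "n = p + q")
          case True
          then have hq: "highp p x \<in> perms q" using xf(2) by simp
          have "\<Theta> n (ptimes u v) (xbar p x) \<longleftrightarrow> \<Theta> p u (lowp p x) \<and> \<Theta> q v (highp p x)"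
            unfolding xf(3) True using trD[OF cong trans up xf(1) vp hq] .
          then show ?thesis using cu cv True' True perms_D[OF xf(1)] perms_D[OF hq] by auto
        next
          case False
          have "length (highp p x) \<noteq> q" using perms_D[OF xf(2)] False True' by auto
          then show ?thesis using cv False by simp
        qed
      next
        case False
        then show ?thesis by auto
      qed
      finally have RHS: "mulS (cmap \<Theta> (basis u)) (cmap \<Theta> (basis v)) x
         = (if n = p + q \<and> \<Theta> n (ptimes u v) (xbar p x) then 1 else (0::'k))"
        unfolding cu_def cv_def .
      show ?thesis
      proof (cases "n = p + q")
        case True
        have "xbar p z0 = ptimes u v \<longleftrightarrow> \<Theta> n (ptimes u v) (xbar p x)"
        proof (rule key[OF cong trans \<open>x \<in> perms n\<close> z0(1)])
          show "ismin \<Theta> n z0" unfolding ismin_def using z0(2) .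
          show "u \<in> perms p" "ismin \<Theta> p u" "v \<in> perms q" "ismin \<Theta> q v" using u v Zset_ismin by blast+
          show "n = p + q" by fact
        qed
        then show ?thesis using LHS RHS by simp
      next
        case False
        then show ?thesis using LHS RHS by simp
      qed
    qed
  qed
  show "inj_on (cmap \<Theta> :: (nat list \<Rightarrow> 'k) \<Rightarrow> _) (KZ \<Theta>)"
  proof (rule inj_onI)
    fix f g :: "nat list \<Rightarrow> 'k"
    assume f: "f \<in> KZ \<Theta>" and g: "g \<in> KZ \<Theta>" and e: "cmap \<Theta> f = cmap \<Theta> g"
    have cz: "cmap \<Theta> h z = h z" if "z \<in> Zset \<Theta> (length z)" for h :: "nat list \<Rightarrow> 'k" and z
    proof -
      have "z \<in> perms (length z)" using that Zset_perms by blast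
      then have "\<Theta> (length z) z z" using lc_refl[OF cong] by blast
      then show ?thesis unfolding cmap_def single_class[OF that \<open>\<Theta> (length z) z z\<close>] by simp
    qed
    show "f = g"
    proof
      fix x
      show "f x = g x"
      proof (cases "x \<in> Zset \<Theta> (length x)")
        case True
        then show ?thesis using cz[OF True, of f] cz[OF True, of g] e by simp
      next
        case False
        have "f x = 0" using f False Zset_len unfolding KZ_def by blast
        moreover have "g x = 0" using g False Zset_len unfolding KZ_def by blast
        ultimately show ?thesis by simp
      qed
    qed
  qed
qed


end
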